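(* There exists a uniform mixture of $k$ Gaussian distributions in $\mathbb R^d$ with identity covariance such that any algorithm (not necessarily efficient) that, given samples $y_1,\dots,y_n$ from the mixture, outputs for each sample $r$ a mean estimate $\mu_{k_r}$, incurs expected error $\mathbb E\Big[\frac1n\sum_{r=1}^n\|\mu_{k_r}-\mu^*_{k^*_r}\|_2^2\Big]\geq c\log k$ for some absolute constant $c>0$.
   Context: $\mu^*_{k^*_r}$ denotes the true mean of the component from which sample $y_r$ was generated. *)

theory Defs
  imports "HOL-Probability.Probability"
begin

text \<open>Vectors in R^d are represented as functions nat => real, of which only the
coordinates i < d matter.\<close>

definition gauss :: "nat \<Rightarrow> (nat \<Rightarrow> real) \<Rightarrow> (nat \<Rightarrow> real) measure" where
  "gauss d \<mu> = PiM {..<d} (\<lambda>i. density lborel (normal_density (\<mu> i) 1))"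

definition sqdist :: "nat \<Rightarrow> (nat \<Rightarrow> real) \<Rightarrow> (nat \<Rightarrow> real) \<Rightarrow> real" where
  "sqdist d x y = (\<Sum>i<d. (x i - y i)\<^sup>2)"

definition obs_space :: "nat \<Rightarrow> nat \<Rightarrow> (nat \<Rightarrow> nat \<Rightarrow> real) measure" where
  "obs_space n d = PiM {..<n} (\<lambda>_. PiM {..<d} (\<lambda>_. lborel))"

text \<open>The true labels z_r are
i.i.d. uniform on {..<k} (hence the average over all label vectors), and given z the
samples y_r are independent with y_r ~ N(mus (z r), I_d).  The algorithm sees the
samples ys and outputs k mean estimates  means ys j  and a label  lab ys r  for each
sample r; the error is (1/n) sum_r || means ys (lab ys r) - mus (z r) ||^2.\<close>
definition expected_error ::
  "nat \<Rightarrow> nat \<Rightarrow> nat \<Rightarrow> (nat \<Rightarrow> nat \<Rightarrow> real)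
   \<Rightarrow> ((nat \<Rightarrow> nat \<Rightarrow> real) \<Rightarrow> nat \<Rightarrow> nat \<Rightarrow> real)
   \<Rightarrow> ((nat \<Rightarrow> nat \<Rightarrow> real) \<Rightarrow> nat \<Rightarrow> nat) \<Rightarrow> ennreal" where
  "expected_error k d n mus means lab =
     ennreal (1 / real k ^ n) *
     (\<Sum>z\<in>PiE {..<n} (\<lambda>_. {..<k}).
        \<integral>\<^sup>+ ys. ennreal ((1 / real n) * (\<Sum>r<n. sqdist d (means ys (lab ys r)) (mus (z r))))
          \<partial>(PiM {..<n} (\<lambda>r. gauss d (mus (z r)))))"

end

theory Submission
  imports Defs
begin


lemma PiM_density:
  fixes M :: "'i \<Rightarrow> 'a measure"
  assumes I: "finite I"
    and sfM: "\<And>i. sigma_finite_measure (M i)"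
    and fm[measurable]: "\<And>i. f i \<in> borel_measurable (M i)"
    and sfD: "\<And>i. sigma_finite_measure (density (M i) (f i))"
  shows "PiM I (\<lambda>i. density (M i) (f i)) = density (PiM I M) (\<lambda>x. \<Prod>i\<in>I. f i (x i))"
proof -
  interpret D: product_sigma_finite "\<lambda>i. density (M i) (f i)" using sfD by (simp add: product_sigma_finite_def)
  interpret P: product_sigma_finite M using sfM by (simp add: product_sigma_finite_def)
  have meas: "(\<lambda>x. \<Prod>i\<in>I. f i (x i)) \<in> borel_measurable (PiM I M)"
    by (intro borel_measurable_prod_ennreal measurable_comp[OF measurable_component_singleton, unfolded comp_def]) auto
  show ?thesis
  proof (rule D.PiM_eqI[symmetric, OF I])
    show "sets (density (Pi\<^sub>M I M) (\<lambda>x. \<Prod>i\<in>I. f i (x i))) = sets (Pi\<^sub>M I (\<lambda>i. density (M i) (f i)))"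
      unfolding sets_density by (intro sets_PiM_cong) (simp_all only: sets_density)
  next
    fix A assume A: "\<And>i. i \<in> I \<Longrightarrow> A i \<in> sets (density (M i) (f i))"
    then have A': "\<And>i. i \<in> I \<Longrightarrow> A i \<in> sets (M i)" by simp
    have PE: "Pi\<^sub>E I A \<in> sets (PiM I M)" using A' by (simp add: sets_PiM_I_finite I)
    have "emeasure (density (Pi\<^sub>M I M) (\<lambda>x. \<Prod>i\<in>I. f i (x i))) (Pi\<^sub>E I A)
        = (\<integral>\<^sup>+ x. (\<Prod>i\<in>I. f i (x i)) * indicator (Pi\<^sub>E I A) x \<partial>PiM I M)"
      using PE meas by (simp add: emeasure_density)
    also have "\<dots> = (\<integral>\<^sup>+ x. (\<Prod>i\<in>I. f i (x i) * indicator (A i) (x i)) \<partial>PiM I M)"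
    proof (rule nn_integral_cong)
      fix x assume "x \<in> space (PiM I M)"
      then have "x \<in> extensional I" by (simp add: space_PiM PiE_def)
      then have "indicator (Pi\<^sub>E I A) x = (\<Prod>i\<in>I. indicator (A i) (x i) :: ennreal)"
        by (auto simp: indicator_def PiE_def Pi_def I)
      then show "(\<Prod>i\<in>I. f i (x i)) * indicator (Pi\<^sub>E I A) x = (\<Prod>i\<in>I. f i (x i) * indicator (A i) (x i))"
        by (simp add: prod.distrib)
    qed
    also have "\<dots> = (\<Prod>i\<in>I. \<integral>\<^sup>+ y. f i y * indicator (A i) y \<partial>M i)"
      using A' by (intro P.product_nn_integral_prod I) auto
    also have "\<dots> = (\<Prod>i\<in>I. emeasure (density (M i) (f i)) (A i))"
      using A' by (intro prod.cong refl) (simp add: emeasure_density)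
    finally show "emeasure (density (Pi\<^sub>M I M) (\<lambda>x. \<Prod>i\<in>I. f i (x i))) (Pi\<^sub>E I A) = (\<Prod>i\<in>I. emeasure (density (M i) (f i)) (A i))" .
  qed
qed




definition phi :: "nat \<Rightarrow> (nat \<Rightarrow> real) \<Rightarrow> (nat \<Rightarrow> real) \<Rightarrow> real" where
  "phi d \<mu> y = (\<Prod>i<d. normal_density (\<mu> i) 1 (y i))"

lemma phi_nonneg: "0 \<le> phi d \<mu> y"
  unfolding phi_def by (intro prod_nonneg) (simp add: normal_density_nonneg)

lemma phi_meas[measurable]: "phi d \<mu> \<in> borel_measurable (PiM {..<d} (\<lambda>_. lborel))"
  unfolding phi_def by measurable

lemma gauss_density: "gauss d \<mu> = density (PiM {..<d} (\<lambda>_. lborel)) (\<lambda>y. ennreal (phi d \<mu> y))"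
proof -
  have "gauss d \<mu> = density (PiM {..<d} (\<lambda>_. lborel)) (\<lambda>y. \<Prod>i<d. ennreal (normal_density (\<mu> i) 1 (y i)))"
    unfolding gauss_def
    apply (rule PiM_density)
    apply (auto intro!: prob_space_normal_density prob_space_imp_sigma_finite simp: lborel.sigma_finite_measure_axioms)
    done
  also have "\<dots> = density (PiM {..<d} (\<lambda>_. lborel)) (\<lambda>y. ennreal (phi d \<mu> y))"
    unfolding phi_def by (intro density_cong) (auto simp: prod_ennreal normal_density_nonneg)
  finally show ?thesis .
qed

lemma int_phi: "(\<integral>\<^sup>+ y. ennreal (phi d \<mu> y) \<partial>PiM {..<d} (\<lambda>_. lborel)) = 1"
proof -
  interpret prob_space "gauss d \<mu>" unfolding gauss_def
    by (intro prob_space_PiM prob_space_normal_density) simp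
  have "emeasure (gauss d \<mu>) (space (gauss d \<mu>)) = 1" by (rule emeasure_space_1)
  then show ?thesis unfolding gauss_density
    by (simp add: emeasure_density)
qed

lemma prob_gauss: "prob_space (gauss d \<mu>)" unfolding gauss_def
    by (intro prob_space_PiM prob_space_normal_density) simp

lemma Pz_density: "PiM {..<n} (\<lambda>r. gauss d (mu r)) = density (obs_space n d) (\<lambda>ys. ennreal (\<Prod>r<n. phi d (mu r) (ys r)))"
proof -
  have "PiM {..<n} (\<lambda>r. gauss d (mu r)) = PiM {..<n} (\<lambda>r. density (PiM {..<d} (\<lambda>_. lborel)) (\<lambda>y. ennreal (phi d (mu r) y)))"
    by (simp add: gauss_density)
  also have "\<dots> = density (obs_space n d) (\<lambda>ys. \<Prod>r<n. ennreal (phi d (mu r) (ys r)))"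
    unfolding obs_space_def
    apply (rule PiM_density)
    apply (simp_all add: gauss_density[symmetric])
    apply (auto intro: prob_gauss prob_space_imp_sigma_finite product_sigma_finite.sigma_finite simp: product_sigma_finite_def lborel.sigma_finite_measure_axioms)
    done
  also have "\<dots> = density (obs_space n d) (\<lambda>ys. ennreal (\<Prod>r<n. phi d (mu r) (ys r)))"
    unfolding obs_space_def by (intro density_cong) (auto simp: prod_ennreal phi_nonneg)
  finally show ?thesis .
qed


definition mu_of :: "real \<Rightarrow> nat \<Rightarrow> nat \<Rightarrow> real" where
  "mu_of s j = (\<lambda>i. if i = j then s else 0)"

lemma nd_sq: "normal_density m 1 x ^ 2 = exp (m\<^sup>2) * normal_density 0 1 x * normal_density (2*m) 1 x"
proof -
  define c where "c = 1 / sqrt (2 * pi * (1::real)\<^sup>2)"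
  define E where "E = (\<lambda>\<mu>::real. exp (-(x - \<mu>)\<^sup>2/ (2 * 1\<^sup>2)))"
  have nd: "\<And>\<mu>. normal_density \<mu> 1 x = c * E \<mu>" unfolding c_def E_def normal_density_def by simp
  have e: "-(x-m)\<^sup>2/ (2 * 1\<^sup>2) + -(x-m)\<^sup>2/ (2 * 1\<^sup>2) = m\<^sup>2 + (-(x-0)\<^sup>2/ (2 * 1\<^sup>2) + -(x-2*m)\<^sup>2/ (2 * 1\<^sup>2))"
    by (simp add: power2_eq_square field_simps)
  have "E m ^ 2 = exp (-(x-m)\<^sup>2/ (2 * 1\<^sup>2) + -(x-m)\<^sup>2/ (2 * 1\<^sup>2))"
    unfolding E_def by (simp only: power2_eq_square mult_exp_exp)
  also have "\<dots> = exp (m\<^sup>2) * (E 0 * E (2*m))"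
    unfolding E_def by (subst e) (simp only: exp_add)
  finally have EE: "E m ^ 2 = exp (m\<^sup>2) * (E 0 * E (2*m))" .
  have "normal_density m 1 x ^ 2 = c^2 * E m ^ 2" by (simp only: nd power_mult_distrib)
  also have "\<dots> = exp (m\<^sup>2) * (c * E 0) * (c * E (2*m))" by (simp only: EE) (simp only: power2_eq_square ac_simps)
  finally show ?thesis by (simp only: nd)
qed

lemma phi_sq: "phi d \<mu> y ^ 2 = exp (\<Sum>i<d. (\<mu> i)\<^sup>2) * phi d (\<lambda>_. 0) y * phi d (\<lambda>i. 2 * \<mu> i) y"
  unfolding phi_def
  by (simp add: prod_power_distrib nd_sq exp_sum prod.distrib mult.assoc)

lemma sum_mu_sq: "j < d \<Longrightarrow> (\<Sum>i<d. (mu_of s j i)\<^sup>2) = s\<^sup>2"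
proof -
  assume "j < d"
  have "(\<Sum>i<d. (mu_of s j i)\<^sup>2) = (\<Sum>i<d. if i = j then s\<^sup>2 else 0)"
    by (intro sum.cong) (auto simp: mu_of_def)
  then show ?thesis using \<open>j<d\<close> by simp
qed

lemma sqdist_mu: "j < d \<Longrightarrow> j' < d \<Longrightarrow> j \<noteq> j' \<Longrightarrow> sqdist d (mu_of s j) (mu_of s j') = 2 * s\<^sup>2"
proof -
  assume a: "j < d" "j' < d" "j \<noteq> j'"
  have "sqdist d (mu_of s j) (mu_of s j') = (\<Sum>i<d. (if i = j then s\<^sup>2 else 0) + (if i = j' then s\<^sup>2 else 0))"
    unfolding sqdist_def apply (intro sum.cong refl) using a by (auto simp: mu_of_def)
  then show ?thesis using a by (simp add: sum.distrib)
qed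

lemma sqdist_tri: "sqdist d a c \<le> 2 * sqdist d a b + 2 * sqdist d b c"
proof -
  have "\<And>x y z::real. (x - z)\<^sup>2 \<le> 2 * (x - y)\<^sup>2 + 2 * (y - z)\<^sup>2"
  proof -
    fix x y z :: real
    have "0 \<le> (x - 2*y + z)\<^sup>2" by simp
    then show "(x - z)\<^sup>2 \<le> 2 * (x - y)\<^sup>2 + 2 * (y - z)\<^sup>2"
      by (simp add: power2_eq_square algebra_simps)
  qed
  then show ?thesis unfolding sqdist_def
    by (simp add: sum_distrib_left sum.distrib[symmetric] sum_mono)
qed

lemma sqdist_nonneg: "0 \<le> sqdist d a b"
  unfolding sqdist_def by (simp add: sum_nonneg)

lemma sqdist_sym: "sqdist d a b = sqdist d b a"
  unfolding sqdist_def by (simp add: power2_commute)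

definition U :: "nat \<Rightarrow> nat \<Rightarrow> real \<Rightarrow> real \<Rightarrow> (nat \<Rightarrow> real) \<Rightarrow> real" where
  "U k d s lam y = (lam * exp (s\<^sup>2) * (\<Sum>j<k. phi d (\<lambda>i. 2 * mu_of s j i) y) + phi d (\<lambda>_. 0) y / lam) / 2"

lemma phi_le_U:
  assumes "j < k" "k \<le> d" "lam > 0"
  shows "phi d (mu_of s j) y \<le> U k d s lam y"
proof -
  let ?a = "phi d (mu_of s j) y" and ?p = "phi d (\<lambda>_. 0) y" and ?b = "phi d (\<lambda>i. 2 * mu_of s j i) y"
  let ?S = "(\<Sum>j<k. phi d (\<lambda>i. 2 * mu_of s j i) y)"
  have jd: "j < d" using assms by simp
  have sq: "?a ^ 2 = exp (s\<^sup>2) * ?p * ?b"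
    using phi_sq[of d "mu_of s j" y] unfolding sum_mu_sq[OF jd] .
  have bS: "?b \<le> ?S"
    by (rule member_le_sum) (use assms(1) phi_nonneg in auto)
  have lpos: "0 \<le> lam * exp (s\<^sup>2)" using assms(3) by simp
  have "lam * exp (s\<^sup>2) * ?b \<le> lam * exp (s\<^sup>2) * ?S"
    by (rule mult_left_mono[OF bS lpos])
  moreover have "2 * U k d s lam y = lam * exp (s\<^sup>2) * ?S + ?p / lam"
    unfolding U_def by simp
  ultimately have le: "lam * exp (s\<^sup>2) * ?b + ?p / lam \<le> 2 * U k d s lam y"
    by linarith
  define X where "X = lam * exp (s\<^sup>2) * ?b"
  define Y where "Y = ?p / lam"
  have id: "(X+Y)^2 = (X-Y)^2 + 4*(X*Y)" by (simp add: power2_eq_square algebra_simps)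
  have xy: "X * Y = exp (s\<^sup>2) * ?p * ?b" unfolding X_def Y_def using assms(3) by simp
  have sq2: "(2 * ?a)^2 \<le> (X+Y)^2"
  proof -
    have "(2 * ?a)^2 = 4 * ?a^2" by (simp add: power2_eq_square)
    also have "\<dots> = 4 * (X*Y)" using sq xy by simp
    also have "\<dots> \<le> (X-Y)^2 + 4*(X*Y)" by simp
    finally show ?thesis using id by simp
  qed
  have "0 \<le> X + Y" unfolding X_def Y_def using assms(3) lpos phi_nonneg
    by (intro add_nonneg_nonneg mult_nonneg_nonneg divide_nonneg_pos) auto
  then have "2 * ?a \<le> X + Y" using sq2 by (rule power2_le_imp_le[rotated])
  with le show ?thesis unfolding X_def Y_def by simp
qed

lemma U_nonneg: "lam > 0 \<Longrightarrow> 0 \<le> U k d s lam y"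
  unfolding U_def by (intro divide_nonneg_pos add_nonneg_nonneg mult_nonneg_nonneg sum_nonneg) (auto simp: phi_nonneg)

lemma pointwise_main:
  assumes "0 < k" "k \<le> d" "lam > 0"
  shows "(s\<^sup>2/2) * (\<Sum>j<k. phi d (mu_of s j) y)
     \<le> (\<Sum>j<k. phi d (mu_of s j) y * sqdist d m (mu_of s j)) + (s\<^sup>2/2) * U k d s lam y"
proof -
  let ?f = "\<lambda>j. sqdist d m (mu_of s j)"
  have "finite ((?f) ` {..<k})" "?f ` {..<k} \<noteq> {}" using assms by auto
  then have "Min (?f ` {..<k}) \<in> ?f ` {..<k}" by (rule Min_in)
  then obtain j0 where j0: "j0 < k" "?f j0 = Min (?f ` {..<k})" by auto
  have minj: "?f j0 \<le> ?f j" if "j < k" for j using j0 that by simp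
  have far: "s\<^sup>2/2 \<le> ?f j" if "j < k" "j \<noteq> j0" for j
  proof -
    have "2 * s\<^sup>2 = sqdist d (mu_of s j) (mu_of s j0)"
      using sqdist_mu[of j d j0 s] that j0 assms by simp
    also have "\<dots> \<le> 2 * sqdist d (mu_of s j) m + 2 * sqdist d m (mu_of s j0)" by (rule sqdist_tri)
    finally show ?thesis using minj[OF that(1)] by (simp add: sqdist_sym)
  qed
  have "(s\<^sup>2/2) * (\<Sum>j<k. phi d (mu_of s j) y) = (s\<^sup>2/2) * phi d (mu_of s j0) y + (s\<^sup>2/2) * (\<Sum>j\<in>{..<k}-{j0}. phi d (mu_of s j) y)"
    using j0 by (simp add: sum.remove distrib_left)
  also have "\<dots> \<le> (s\<^sup>2/2) * U k d s lam y + (\<Sum>j\<in>{..<k}-{j0}. phi d (mu_of s j) y * ?f j)"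
  proof (rule add_mono)
    show "(s\<^sup>2/2) * phi d (mu_of s j0) y \<le> (s\<^sup>2/2) * U k d s lam y"
      using phi_le_U[OF j0(1) assms(2,3)] by (intro mult_left_mono) auto
    have "(s\<^sup>2/2) * (\<Sum>j\<in>{..<k}-{j0}. phi d (mu_of s j) y) = (\<Sum>j\<in>{..<k}-{j0}. phi d (mu_of s j) y * (s\<^sup>2/2))"
      by (simp add: sum_distrib_left mult.commute)
    also have "\<dots> \<le> (\<Sum>j\<in>{..<k}-{j0}. phi d (mu_of s j) y * ?f j)"
      using far by (intro sum_mono mult_left_mono) (auto simp: phi_nonneg)
    finally show "(s\<^sup>2/2) * (\<Sum>j\<in>{..<k}-{j0}. phi d (mu_of s j) y) \<le> (\<Sum>j\<in>{..<k}-{j0}. phi d (mu_of s j) y * ?f j)" .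
  qed
  also have "\<dots> \<le> (s\<^sup>2/2) * U k d s lam y + (\<Sum>j<k. phi d (mu_of s j) y * ?f j)"
    by (intro add_left_mono sum_mono2) (auto simp: phi_nonneg sqdist_nonneg)
  finally show ?thesis by simp
qed


abbreviation L :: "nat \<Rightarrow> (nat \<Rightarrow> real) measure" where "L d \<equiv> PiM {..<d} (\<lambda>_. lborel::real measure)"

lemma sf_L: "sigma_finite_measure (L d)"
  by (rule product_sigma_finite.sigma_finite) (auto simp: product_sigma_finite_def lborel.sigma_finite_measure_axioms)

lemma int_U:
  assumes "lam > 0"
  shows "(\<integral>\<^sup>+ y. ennreal (U k d s lam y) \<partial>L d) = ennreal ((lam * exp (s\<^sup>2) * k + 1/lam) / 2)"
proof -
  have eq: "ennreal (U k d s lam y) = ennreal (lam * exp (s\<^sup>2) / 2) * (\<Sum>j<k. ennreal (phi d (\<lambda>i. 2 * mu_of s j i) y))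
            + ennreal (1 / (2*lam)) * ennreal (phi d (\<lambda>_. 0) y)" for y
  proof -
    have "U k d s lam y = (lam * exp (s\<^sup>2) / 2) * (\<Sum>j<k. phi d (\<lambda>i. 2 * mu_of s j i) y) + (1 / (2*lam)) * phi d (\<lambda>_. 0) y"
      unfolding U_def by (simp add: field_simps)
    then show ?thesis using assms
      by (simp add: ennreal_plus[symmetric] ennreal_mult[symmetric] sum_ennreal phi_nonneg sum_nonneg add_nonneg_nonneg del: ennreal_plus)
  qed
  have "(\<integral>\<^sup>+ y. ennreal (U k d s lam y) \<partial>L d) =
     ennreal (lam * exp (s\<^sup>2) / 2) * (\<Sum>j<k. \<integral>\<^sup>+ y. ennreal (phi d (\<lambda>i. 2 * mu_of s j i) y) \<partial>L d)
     + ennreal (1 / (2*lam)) * (\<integral>\<^sup>+ y. ennreal (phi d (\<lambda>_. 0) y) \<partial>L d)"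
    unfolding eq
    by (simp add: nn_integral_add nn_integral_cmult nn_integral_sum)
  also have "\<dots> = ennreal (lam * exp (s\<^sup>2) / 2) * of_nat k + ennreal (1 / (2*lam))"
    by (simp add: int_phi)
  also have "\<dots> = ennreal ((lam * exp (s\<^sup>2) * k + 1/lam) / 2)"
    using assms by (simp add: ennreal_of_nat_eq_real_of_nat ennreal_mult[symmetric] ennreal_plus[symmetric] field_simps del: ennreal_plus)
  finally show ?thesis .
qed

lemma int_prod_one:
  fixes mus :: "nat \<Rightarrow> nat \<Rightarrow> real" and g :: "nat \<Rightarrow> nat"
  assumes r: "r < n" and h[measurable]: "h \<in> borel_measurable (L d)" and hnn: "\<And>y. 0 \<le> h y"
  shows "(\<integral>\<^sup>+ ys. ennreal ((\<Prod>t\<in>{..<n}-{r}. phi d (mus (g t)) (ys t)) * h (ys r)) \<partial>obs_space n d)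
       = (\<integral>\<^sup>+ y. ennreal (h y) \<partial>L d)"
proof -
  interpret P: product_sigma_finite "\<lambda>_::nat. L d" using sf_L by (simp add: product_sigma_finite_def)
  define F where "F = (\<lambda>t y. if t = r then ennreal (h y) else ennreal (phi d (mus (g t)) y))"
  have Fm: "F t \<in> borel_measurable (L d)" for t unfolding F_def by (cases "t = r") simp_all
  have pt: "ennreal ((\<Prod>t\<in>{..<n}-{r}. phi d (mus (g t)) (ys t)) * h (ys r)) = (\<Prod>t<n. F t (ys t))" for ys
  proof -
    have "(\<Prod>t<n. F t (ys t)) = F r (ys r) * (\<Prod>t\<in>{..<n}-{r}. F t (ys t))"
      using r by (simp add: prod.remove)
    also have "(\<Prod>t\<in>{..<n}-{r}. F t (ys t)) = (\<Prod>t\<in>{..<n}-{r}. ennreal (phi d (mus (g t)) (ys t)))"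
      by (intro prod.cong) (auto simp: F_def)
    finally show ?thesis
      by (simp add: F_def prod_ennreal phi_nonneg hnn prod_nonneg ennreal_mult[symmetric] mult.commute)
  qed
  have "(\<integral>\<^sup>+ ys. ennreal ((\<Prod>t\<in>{..<n}-{r}. phi d (mus (g t)) (ys t)) * h (ys r)) \<partial>obs_space n d)
     = (\<integral>\<^sup>+ ys. (\<Prod>t<n. F t (ys t)) \<partial>PiM {..<n} (\<lambda>_. L d))"
    unfolding pt obs_space_def ..
  also have "\<dots> = (\<Prod>t<n. integral\<^sup>N (L d) (F t))"
    by (rule P.product_nn_integral_prod) (auto intro: Fm)
  also have "\<dots> = integral\<^sup>N (L d) (F r) * (\<Prod>t\<in>{..<n}-{r}. integral\<^sup>N (L d) (F t))"
    using r by (simp add: prod.remove)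
  also have "(\<Prod>t\<in>{..<n}-{r}. integral\<^sup>N (L d) (F t)) = 1"
    by (intro prod.neutral) (auto simp: F_def int_phi)
  finally show ?thesis by (simp add: F_def)
qed


lemma ennreal_sub_le:
  assumes "ennreal a \<le> X + ennreal b" "0 \<le> b"
  shows "ennreal (a - b) \<le> X"
proof (cases X)
  case (real x)
  then have "ennreal a \<le> ennreal (x + b)" using assms by (simp add: ennreal_plus)
  then have "a \<le> x + b \<or> a \<le> 0" by (metis ennreal_le_iff2 ennreal_le_iff linorder_le_cases) 
  then show ?thesis using real assms by (auto simp: ennreal_le_iff2 intro: ennreal_leI)
qed simp

lemma q_meas:
  assumes "\<And>i. i < d \<Longrightarrow> (\<lambda>ys. m ys i) \<in> borel_measurable M"
  shows "(\<lambda>ys. sqdist d (m ys) \<mu>) \<in> borel_measurable M"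
  unfolding sqdist_def using assms by (intro borel_measurable_sum borel_measurable_power borel_measurable_diff) auto

lemma phi_comp_meas: "t < n \<Longrightarrow> (\<lambda>ys. phi d \<mu> (ys t)) \<in> borel_measurable (obs_space n d)"
  unfolding obs_space_def
  by (rule measurable_compose[OF measurable_component_singleton[of t] phi_meas]) simp

lemma A_meas: "S \<subseteq> {..<n} \<Longrightarrow> (\<lambda>ys. \<Prod>t\<in>S. phi d (mus t) (ys t)) \<in> borel_measurable (obs_space n d)"
  by (intro borel_measurable_prod phi_comp_meas) auto


lemma per_g:
  fixes m :: "(nat \<Rightarrow> nat \<Rightarrow> real) \<Rightarrow> nat \<Rightarrow> real" and g :: "nat \<Rightarrow> nat"
  assumes k: "0 < k" "k \<le> d" and r: "r < n" and lam: "lam > 0"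
    and mm: "\<And>i. i < d \<Longrightarrow> (\<lambda>ys. m ys i) \<in> borel_measurable (obs_space n d)"
  shows "ennreal ((s\<^sup>2/2) * k - (s\<^sup>2/2) * ((lam * exp (s\<^sup>2) * k + 1/lam) / 2))
     \<le> (\<Sum>y<k. \<integral>\<^sup>+ ys. ennreal ((\<Prod>t<n. phi d (mu_of s ((g(r:=y)) t)) (ys t)) * sqdist d (m ys) (mu_of s ((g(r:=y)) r))) \<partial>obs_space n d)"
proof -
  define A where "A = (\<lambda>ys. \<Prod>t\<in>{..<n}-{r}. phi d (mu_of s (g t)) (ys t))"
  define ph where "ph = (\<lambda>y (x::nat\<Rightarrow>real). phi d (mu_of s y) x)"
  define q where "q = (\<lambda>ys y. sqdist d (m ys) (mu_of s y))"
  have Am: "A \<in> borel_measurable (obs_space n d)" unfolding A_def by (rule A_meas) auto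
  have qm: "(\<lambda>ys. q ys y) \<in> borel_measurable (obs_space n d)" for y unfolding q_def by (rule q_meas[OF mm])
  have phm: "(\<lambda>ys. ph y (ys r)) \<in> borel_measurable (obs_space n d)" for y unfolding ph_def using r by (rule phi_comp_meas)
  have Ann: "0 \<le> A ys" for ys unfolding A_def by (intro prod_nonneg) (simp add: phi_nonneg)
  have decomp: "(\<Prod>t<n. phi d (mu_of s ((g(r:=y)) t)) (ys t)) = A ys * ph y (ys r)" for y ys
  proof -
    have "(\<Prod>t<n. phi d (mu_of s ((g(r:=y)) t)) (ys t)) = phi d (mu_of s y) (ys r) * (\<Prod>t\<in>{..<n}-{r}. phi d (mu_of s ((g(r:=y)) t)) (ys t))"
      using r by (simp add: prod.remove)
    also have "(\<Prod>t\<in>{..<n}-{r}. phi d (mu_of s ((g(r:=y)) t)) (ys t)) = A ys"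
      unfolding A_def by (intro prod.cong) auto
    finally show ?thesis by (simp add: ph_def mult.commute)
  qed
  define G where "G = (\<lambda>ys. A ys * (\<Sum>y<k. ph y (ys r) * q ys y))"
  define H1 where "H1 = (\<lambda>ys. A ys * ((s\<^sup>2/2) * U k d s lam (ys r)))"
  define H2 where "H2 = (\<lambda>ys. A ys * ((s\<^sup>2/2) * (\<Sum>y<k. ph y (ys r))))"
  have "(\<Sum>y<k. \<integral>\<^sup>+ ys. ennreal ((\<Prod>t<n. phi d (mu_of s ((g(r:=y)) t)) (ys t)) * sqdist d (m ys) (mu_of s ((g(r:=y)) r))) \<partial>obs_space n d)
      = (\<Sum>y<k. \<integral>\<^sup>+ ys. ennreal (A ys * ph y (ys r) * q ys y) \<partial>obs_space n d)"
    unfolding decomp q_def by simp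
  also have "\<dots> = (\<integral>\<^sup>+ ys. (\<Sum>y<k. ennreal (A ys * ph y (ys r) * q ys y)) \<partial>obs_space n d)"
    using Am phm qm by (intro nn_integral_sum[symmetric]) auto
  also have "\<dots> = (\<integral>\<^sup>+ ys. ennreal (G ys) \<partial>obs_space n d)"
  proof (rule nn_integral_cong)
    fix ys
    have "(\<Sum>y<k. ennreal (A ys * ph y (ys r) * q ys y)) = ennreal (\<Sum>y<k. A ys * ph y (ys r) * q ys y)"
      by (rule sum_ennreal) (auto simp: Ann ph_def phi_nonneg q_def sqdist_nonneg)
    also have "(\<Sum>y<k. A ys * ph y (ys r) * q ys y) = G ys"
      unfolding G_def by (simp add: sum_distrib_left mult.assoc)
    finally show "(\<Sum>y<k. ennreal (A ys * ph y (ys r) * q ys y)) = ennreal (G ys)" .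
  qed
  finally have eqG: "(\<Sum>y<k. \<integral>\<^sup>+ ys. ennreal ((\<Prod>t<n. phi d (mu_of s ((g(r:=y)) t)) (ys t)) * sqdist d (m ys) (mu_of s ((g(r:=y)) r))) \<partial>obs_space n d)
     = (\<integral>\<^sup>+ ys. ennreal (G ys) \<partial>obs_space n d)" .
  have Um: "(\<lambda>y. (s\<^sup>2/2) * U k d s lam y) \<in> borel_measurable (L d)"
    unfolding U_def by measurable
  have Sm: "(\<lambda>y. (s\<^sup>2/2) * (\<Sum>j<k. ph j y)) \<in> borel_measurable (L d)"
    unfolding ph_def by measurable
  have iH1: "(\<integral>\<^sup>+ ys. ennreal (H1 ys) \<partial>obs_space n d) = ennreal ((s\<^sup>2/2) * ((lam * exp (s\<^sup>2) * k + 1/lam) / 2))"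
  proof -
    have "(\<integral>\<^sup>+ ys. ennreal (H1 ys) \<partial>obs_space n d) = (\<integral>\<^sup>+ y. ennreal ((s\<^sup>2/2) * U k d s lam y) \<partial>L d)"
      unfolding H1_def A_def
      by (rule int_prod_one[OF r Um]) (simp add: U_nonneg lam)
    also have "\<dots> = (\<integral>\<^sup>+ y. ennreal (s\<^sup>2/2) * ennreal (U k d s lam y) \<partial>L d)"
      by (intro nn_integral_cong ennreal_mult) (auto simp: U_nonneg lam)
    also have "\<dots> = ennreal (s\<^sup>2/2) * (\<integral>\<^sup>+ y. ennreal (U k d s lam y) \<partial>L d)"
      by (rule nn_integral_cmult) (unfold U_def, measurable)
    also have "\<dots> = ennreal ((s\<^sup>2/2) * ((lam * exp (s\<^sup>2) * k + 1/lam) / 2))"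
      unfolding int_U[OF lam] by (rule ennreal_mult[symmetric]) (use lam in \<open>auto intro!: divide_nonneg_pos add_nonneg_nonneg mult_nonneg_nonneg\<close>)
    finally show ?thesis .
  qed
  have iH2: "(\<integral>\<^sup>+ ys. ennreal (H2 ys) \<partial>obs_space n d) = ennreal ((s\<^sup>2/2) * k)"
  proof -
    have "(\<integral>\<^sup>+ ys. ennreal (H2 ys) \<partial>obs_space n d) = (\<integral>\<^sup>+ y. ennreal ((s\<^sup>2/2) * (\<Sum>j<k. ph j y)) \<partial>L d)"
      unfolding H2_def A_def
      by (rule int_prod_one[OF r Sm]) (simp add: ph_def phi_nonneg sum_nonneg)
    also have "\<dots> = (\<integral>\<^sup>+ y. ennreal (s\<^sup>2/2) * (\<Sum>j<k. ennreal (ph j y)) \<partial>L d)"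
      by (intro nn_integral_cong) (simp add: ennreal_mult[symmetric] sum_ennreal ph_def phi_nonneg sum_nonneg)
    also have "\<dots> = ennreal (s\<^sup>2/2) * (\<integral>\<^sup>+ y. (\<Sum>j<k. ennreal (ph j y)) \<partial>L d)"
      by (rule nn_integral_cmult) (unfold ph_def, measurable)
    also have "\<dots> = ennreal (s\<^sup>2/2) * (\<Sum>j<k. \<integral>\<^sup>+ y. ennreal (ph j y) \<partial>L d)"
      by (subst nn_integral_sum) (auto simp: ph_def)
    also have "\<dots> = ennreal ((s\<^sup>2/2) * k)"
      by (simp add: ph_def int_phi ennreal_of_nat_eq_real_of_nat) (subst ennreal_mult[symmetric]; simp)
    finally show ?thesis .
  qed
  have "ennreal ((s\<^sup>2/2) * k) \<le> (\<integral>\<^sup>+ ys. ennreal (G ys) + ennreal (H1 ys) \<partial>obs_space n d)"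
    unfolding iH2[symmetric]
  proof (rule nn_integral_mono)
    fix ys
    have "(s\<^sup>2/2) * (\<Sum>j<k. ph j (ys r)) \<le> (\<Sum>y<k. ph y (ys r) * q ys y) + (s\<^sup>2/2) * U k d s lam (ys r)"
      unfolding ph_def q_def by (rule pointwise_main[OF k lam])
    then have "A ys * ((s\<^sup>2/2) * (\<Sum>j<k. ph j (ys r))) \<le> A ys * ((\<Sum>y<k. ph y (ys r) * q ys y) + (s\<^sup>2/2) * U k d s lam (ys r))"
      by (rule mult_left_mono[OF _ Ann])
    then have le: "H2 ys \<le> G ys + H1 ys"
      unfolding H2_def G_def H1_def by (simp only: distrib_left)
    have "0 \<le> G ys" unfolding G_def using Ann[of ys]
      by (intro mult_nonneg_nonneg sum_nonneg) (auto simp: ph_def q_def phi_nonneg sqdist_nonneg)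
    moreover have "0 \<le> H1 ys" unfolding H1_def using Ann[of ys] U_nonneg[OF lam]
      by (intro mult_nonneg_nonneg) auto
    ultimately show "ennreal (H2 ys) \<le> ennreal (G ys) + ennreal (H1 ys)"
      using le by (simp add: ennreal_plus[symmetric] del: ennreal_plus)
  qed
  also have "\<dots> = (\<integral>\<^sup>+ ys. ennreal (G ys) \<partial>obs_space n d) + (\<integral>\<^sup>+ ys. ennreal (H1 ys) \<partial>obs_space n d)"
  proof (rule nn_integral_add)
    have Gm: "G \<in> borel_measurable (obs_space n d)"
      unfolding G_def by (intro borel_measurable_times borel_measurable_sum Am phm qm)
    then show "(\<lambda>x. ennreal (G x)) \<in> borel_measurable (obs_space n d)" by measurable
    have Ucm: "(\<lambda>ys. (s\<^sup>2/2) * U k d s lam (ys r)) \<in> borel_measurable (obs_space n d)"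
      unfolding obs_space_def by (rule measurable_compose[OF measurable_component_singleton[of r] Um]) (use r in simp)
    have "H1 \<in> borel_measurable (obs_space n d)"
      unfolding H1_def by (intro borel_measurable_times Am Ucm)
    then show "(\<lambda>x. ennreal (H1 x)) \<in> borel_measurable (obs_space n d)" by measurable
  qed
  finally have "ennreal ((s\<^sup>2/2) * k) \<le> (\<integral>\<^sup>+ ys. ennreal (G ys) \<partial>obs_space n d) + ennreal ((s\<^sup>2/2) * ((lam * exp (s\<^sup>2) * k + 1/lam) / 2))"
    unfolding iH1 .
  then show ?thesis unfolding eqG
    by (rule ennreal_sub_le) (use lam in \<open>auto intro!: mult_nonneg_nonneg add_nonneg_nonneg\<close>)
qed


lemma per_r:
  fixes m :: "(nat \<Rightarrow> nat \<Rightarrow> real) \<Rightarrow> nat \<Rightarrow> real"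
  assumes k: "0 < k" "k \<le> d" and r: "r < n" and lam: "lam > 0"
    and mm: "\<And>i. i < d \<Longrightarrow> (\<lambda>ys. m ys i) \<in> borel_measurable (obs_space n d)"
  shows "of_nat (k ^ (n-1)) * ennreal ((s\<^sup>2/2) * k - (s\<^sup>2/2) * ((lam * exp (s\<^sup>2) * k + 1/lam) / 2))
     \<le> (\<Sum>z\<in>PiE {..<n} (\<lambda>_. {..<k}). \<integral>\<^sup>+ ys. ennreal ((\<Prod>t<n. phi d (mu_of s (z t)) (ys t)) * sqdist d (m ys) (mu_of s (z r))) \<partial>obs_space n d)"
proof -
  define F where "F = (\<lambda>z. \<integral>\<^sup>+ ys. ennreal ((\<Prod>t<n. phi d (mu_of s (z t)) (ys t)) * sqdist d (m ys) (mu_of s (z r))) \<partial>obs_space n d)"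
  define B where "B = ennreal ((s\<^sup>2/2) * k - (s\<^sup>2/2) * ((lam * exp (s\<^sup>2) * k + 1/lam) / 2))"
  let ?K = "{..<k}" and ?N' = "{..<n} - {r}"
  have N: "insert r ?N' = {..<n}" using r by auto
  have PE: "PiE {..<n} (\<lambda>_. ?K) = (\<lambda>(y, g). g(r := y)) ` (?K \<times> PiE ?N' (\<lambda>_. ?K))"
    using PiE_insert_eq[of r ?N' "\<lambda>_. ?K"] N by simp
  have inj: "inj_on (\<lambda>(y, g). g(r := y)) (?K \<times> PiE ?N' (\<lambda>_. ?K))"
    using inj_combinator[of r ?N' "\<lambda>_. ?K"] by simp
  have "(\<Sum>z\<in>PiE {..<n} (\<lambda>_. ?K). F z) = (\<Sum>p\<in>?K \<times> PiE ?N' (\<lambda>_. ?K). F ((\<lambda>(y, g). g(r := y)) p))"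
    unfolding PE by (rule sum.reindex[OF inj, unfolded comp_def])
  also have "\<dots> = (\<Sum>y\<in>?K. \<Sum>g\<in>PiE ?N' (\<lambda>_. ?K). F (g(r := y)))"
    by (simp add: sum.cartesian_product split_def)
  also have "\<dots> = (\<Sum>g\<in>PiE ?N' (\<lambda>_. ?K). \<Sum>y\<in>?K. F (g(r := y)))"
    by (rule sum.swap)
  also have "\<dots> \<ge> (\<Sum>g\<in>PiE ?N' (\<lambda>_. ?K). B)"
  proof (rule sum_mono)
    fix g
    show "B \<le> (\<Sum>y\<in>?K. F (g(r := y)))"
      unfolding B_def F_def using per_g[OF k r lam mm, where g=g and s=s] by simp
  qed
  moreover have "(\<Sum>g\<in>PiE ?N' (\<lambda>_. ?K). B) = of_nat (k ^ (n-1)) * B"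
    using r by (simp add: card_PiE)
  ultimately show ?thesis unfolding F_def B_def by simp
qed


lemma ln_bound:
  assumes "(k::nat) \<ge> 2"
  shows "ln (real k) / 2 \<le> ln (81/100 * real k)"
proof -
  have kp: "(0::real) < real k" using assms by simp
  have "real k \<le> (81/100 * real k)^2"
  proof -
    have "real k * 1 \<le> real k * (6561/10000 * real k)"
      using assms by (intro mult_left_mono) auto
    then show ?thesis by (simp add: power2_eq_square)
  qed
  then have "ln (real k) \<le> ln ((81/100 * real k)^2)"
    using kp by (subst ln_le_cancel_iff) auto
  also have "\<dots> = 2 * ln (81/100 * real k)"
    using kp by (simp add: ln_realpow)
  finally show ?thesis by simp
qed

lemma ennreal_mult3: "0 \<le> a \<Longrightarrow> 0 \<le> b \<Longrightarrow> 0 \<le> c \<Longrightarrow> ennreal a * (ennreal b * ennreal c) = ennreal (a * (b * c))"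
  by (simp add: ennreal_mult)

lemma main_bound:
  fixes means :: "(nat \<Rightarrow> nat \<Rightarrow> real) \<Rightarrow> nat \<Rightarrow> nat \<Rightarrow> real" and lab :: "(nat \<Rightarrow> nat \<Rightarrow> real) \<Rightarrow> nat \<Rightarrow> nat"
  assumes k: "0 < k" "k \<le> d" and n: "1 \<le> n" and lam: "lam > 0"
    and mm: "\<forall>r<n. \<forall>i<d. (\<lambda>ys. means ys (lab ys r) i) \<in> borel_measurable (obs_space n d)"
  shows "ennreal (((s\<^sup>2/2) * k - (s\<^sup>2/2) * ((lam * exp (s\<^sup>2) * k + 1/lam) / 2)) / k)
     \<le> expected_error k d n (mu_of s) means lab"
proof -
  define rho where "rho = (\<lambda>z ys. \<Prod>t<n. phi d (mu_of s (z t)) (ys t))"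
  define T where "T = (\<lambda>r z. \<integral>\<^sup>+ ys. ennreal (rho z ys * sqdist d (means ys (lab ys r)) (mu_of s (z r))) \<partial>obs_space n d)"
  define Bv where "Bv = (s\<^sup>2/2) * k - (s\<^sup>2/2) * ((lam * exp (s\<^sup>2) * k + 1/lam) / 2)"
  have rhom: "rho z \<in> borel_measurable (obs_space n d)" for z
    unfolding rho_def by (rule A_meas) auto
  have rhonn: "0 \<le> rho z ys" for z ys unfolding rho_def by (intro prod_nonneg) (simp add: phi_nonneg)
  have qm: "(\<lambda>ys. sqdist d (means ys (lab ys r)) \<mu>) \<in> borel_measurable (obs_space n d)" if "r < n" for r \<mu>
    by (rule q_meas) (use mm that in auto)
  have tm: "(\<lambda>ys. ennreal (rho z ys * sqdist d (means ys (lab ys r)) \<mu>)) \<in> borel_measurable (obs_space n d)" if "r < n" for r z \<mu>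
  proof -
    note [measurable] = rhom[of z] qm[OF that]
    show ?thesis by measurable
  qed
  have step: "(\<integral>\<^sup>+ ys. ennreal ((1 / real n) * (\<Sum>r<n. sqdist d (means ys (lab ys r)) (mu_of s (z r))))
          \<partial>(PiM {..<n} (\<lambda>r. gauss d (mu_of s (z r))))) = ennreal (1 / real n) * (\<Sum>r<n. T r z)" for z
  proof -
    have "(\<integral>\<^sup>+ ys. ennreal ((1 / real n) * (\<Sum>r<n. sqdist d (means ys (lab ys r)) (mu_of s (z r))))
          \<partial>(PiM {..<n} (\<lambda>r. gauss d (mu_of s (z r)))))
        = (\<integral>\<^sup>+ ys. ennreal (rho z ys) * ennreal ((1 / real n) * (\<Sum>r<n. sqdist d (means ys (lab ys r)) (mu_of s (z r)))) \<partial>obs_space n d)"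
      unfolding Pz_density rho_def
    proof (rule nn_integral_density)
      show "(\<lambda>x. ennreal (\<Prod>r<n. phi d (mu_of s (z r)) (x r))) \<in> borel_measurable (obs_space n d)" using rhom[of z] unfolding rho_def by measurable
      have "(\<lambda>ys. (1 / real n) * (\<Sum>r<n. sqdist d (means ys (lab ys r)) (mu_of s (z r)))) \<in> borel_measurable (obs_space n d)"
        by (intro borel_measurable_times borel_measurable_const borel_measurable_sum qm) auto
      then show "(\<lambda>ys. ennreal ((1 / real n) * (\<Sum>r<n. sqdist d (means ys (lab ys r)) (mu_of s (z r))))) \<in> borel_measurable (obs_space n d)"
        by measurable
    qed
    also have "\<dots> = (\<integral>\<^sup>+ ys. ennreal (1 / real n) * (\<Sum>r<n. ennreal (rho z ys * sqdist d (means ys (lab ys r)) (mu_of s (z r)))) \<partial>obs_space n d)"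
    proof (rule nn_integral_cong)
      fix ys
      have "ennreal (rho z ys) * ennreal ((1 / real n) * (\<Sum>r<n. sqdist d (means ys (lab ys r)) (mu_of s (z r))))
          = ennreal (1 / real n * (\<Sum>r<n. rho z ys * sqdist d (means ys (lab ys r)) (mu_of s (z r))))"
        by (subst ennreal_mult[symmetric]) (auto simp: rhonn sqdist_nonneg sum_nonneg sum_distrib_left mult_ac)
      also have "\<dots> = ennreal (1 / real n) * (\<Sum>r<n. ennreal (rho z ys * sqdist d (means ys (lab ys r)) (mu_of s (z r))))"
        by (subst ennreal_mult) (auto simp: rhonn sqdist_nonneg sum_nonneg sum_ennreal)
      finally show "ennreal (rho z ys) * ennreal ((1 / real n) * (\<Sum>r<n. sqdist d (means ys (lab ys r)) (mu_of s (z r))))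
          = ennreal (1 / real n) * (\<Sum>r<n. ennreal (rho z ys * sqdist d (means ys (lab ys r)) (mu_of s (z r))))" .
    qed
    also have "\<dots> = ennreal (1 / real n) * (\<integral>\<^sup>+ ys. (\<Sum>r<n. ennreal (rho z ys * sqdist d (means ys (lab ys r)) (mu_of s (z r)))) \<partial>obs_space n d)"
      by (rule nn_integral_cmult, rule borel_measurable_sum) (auto intro: tm)
    also have "\<dots> = ennreal (1 / real n) * (\<Sum>r<n. T r z)"
      unfolding T_def
      by (subst nn_integral_sum) (auto intro: tm)
    finally show ?thesis .
  qed
  have "expected_error k d n (mu_of s) means lab
      = ennreal (1 / real k ^ n) * (\<Sum>z\<in>PiE {..<n} (\<lambda>_. {..<k}). ennreal (1 / real n) * (\<Sum>r<n. T r z))"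
    unfolding expected_error_def step ..
  also have "\<dots> = ennreal (1 / real k ^ n) * (ennreal (1 / real n) * (\<Sum>r<n. \<Sum>z\<in>PiE {..<n} (\<lambda>_. {..<k}). T r z))"
    by (simp add: sum_distrib_left[symmetric] sum.swap[of _ "{..<n}"])
  also have "\<dots> \<ge> ennreal (1 / real k ^ n) * (ennreal (1 / real n) * (\<Sum>r<n. of_nat (k ^ (n-1)) * ennreal Bv))"
  proof (intro mult_left_mono sum_mono)
    fix r assume "r \<in> {..<n}"
    then have r: "r < n" by simp
    have "\<And>i. i < d \<Longrightarrow> (\<lambda>ys. means ys (lab ys r) i) \<in> borel_measurable (obs_space n d)"
      using mm r by simp
    from per_r[OF k r lam this, where s=s]
    show "of_nat (k ^ (n-1)) * ennreal Bv \<le> (\<Sum>z\<in>PiE {..<n} (\<lambda>_. {..<k}). T r z)"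
      unfolding T_def rho_def Bv_def .
  qed auto
  also have "ennreal (1 / real k ^ n) * (ennreal (1 / real n) * (\<Sum>r<n. of_nat (k ^ (n-1)) * ennreal Bv))
     = ennreal (Bv / k)"
  proof -
    have "(\<Sum>r<n. of_nat (k ^ (n-1)) * ennreal Bv) = ennreal (real n * (real k ^ (n-1) * max 0 Bv))"
    proof -
      have "(\<Sum>r<n. of_nat (k ^ (n-1)) * ennreal Bv) = ennreal (real n) * (ennreal (real k ^ (n-1)) * ennreal (max 0 Bv))"
        by (simp add: ennreal_of_nat_eq_real_of_nat ennreal_max_0)
      also have "\<dots> = ennreal (real n * (real k ^ (n-1) * max 0 Bv))"
        by (simp add: ennreal_mult)
      finally show ?thesis .
    qed
    moreover have req: "(1 / real k ^ n) * ((1 / real n) * (real n * (real k ^ (n-1) * max 0 Bv))) = max 0 Bv / k"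
    proof -
      have kn: "real k ^ n = real k * real k ^ (n-1)" using n by (cases n) auto
      have a0: "real k ^ (n-1) \<noteq> 0" using k by simp
      have "(1 / real n) * (real n * (real k ^ (n-1) * max 0 Bv)) = real k ^ (n-1) * max 0 Bv"
        using n by simp
      moreover have "(1 / (real k * real k ^ (n-1))) * (real k ^ (n-1) * max 0 Bv) = max 0 Bv / k"
        using a0 by simp
      ultimately show ?thesis unfolding kn by simp
    qed
    moreover have "ennreal (max 0 Bv / k) = ennreal (Bv / k)"
      using k by (cases "Bv \<ge> 0") (auto simp: max_def ennreal_neg divide_nonpos_pos)
    moreover have "ennreal (1 / real k ^ n) * (ennreal (1 / real n) * ennreal (real n * (real k ^ (n-1) * max 0 Bv)))
       = ennreal ((1 / real k ^ n) * ((1 / real n) * (real n * (real k ^ (n-1) * max 0 Bv))))"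
      by (rule ennreal_mult3) auto
    ultimately show ?thesis by simp
  qed
  finally show ?thesis unfolding Bv_def .
qed


theorem theorem7p1:
  "\<exists>c>0. \<forall>k\<ge>2. \<forall>d\<ge>k. \<exists>mus :: nat \<Rightarrow> nat \<Rightarrow> real.
     \<forall>n\<ge>1. \<forall>(means :: (nat \<Rightarrow> nat \<Rightarrow> real) \<Rightarrow> nat \<Rightarrow> nat \<Rightarrow> real)
              (lab :: (nat \<Rightarrow> nat \<Rightarrow> real) \<Rightarrow> nat \<Rightarrow> nat).
       (\<forall>ys r. r < n \<longrightarrow> lab ys r < k) \<longrightarrow>
       (\<forall>r<n. \<forall>i<d. (\<lambda>ys. means ys (lab ys r) i) \<in> borel_measurable (obs_space n d)) \<longrightarrow>
       expected_error k d n mus means lab \<ge> ennreal (c * ln (real k))"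
proof (intro exI[of _ "1/40::real"] conjI allI impI)
  show "(0::real) < 1/40" by simp
next
  fix k d :: nat
  assume k2: "2 \<le> k" and kd: "k \<le> d"
  define s where "s = sqrt (ln (81/100 * real k))"
  define lam where "lam = 10 / (9 * real k)"
  have kpos: "(0::real) < real k" using k2 by simp
  have lpos: "0 < ln (81/100 * real k)" using k2 by (subst ln_gt_zero_iff) auto
  have s2: "s\<^sup>2 = ln (81/100 * real k)" unfolding s_def using lpos by simp
  have es: "exp (s\<^sup>2) = 81/100 * real k" unfolding s2 using kpos by simp
  have lam: "lam > 0" unfolding lam_def using kpos by simp
  have IU: "(lam * exp (s\<^sup>2) * k + 1/lam) / 2 = 9/10 * real k"
    unfolding es lam_def using kpos by (simp add: field_simps)
  have Bval: "((s\<^sup>2/2) * k - (s\<^sup>2/2) * ((lam * exp (s\<^sup>2) * k + 1/lam) / 2)) / k = s\<^sup>2 / 20"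
    unfolding IU using kpos by (simp add: field_simps)
  have lnb: "1/40 * ln (real k) \<le> s\<^sup>2 / 20" unfolding s2 using ln_bound[OF k2] by simp
  show "\<exists>mus. \<forall>n\<ge>1. \<forall>means lab. (\<forall>ys r. r < n \<longrightarrow> lab ys r < k) \<longrightarrow>
       (\<forall>r<n. \<forall>i<d. (\<lambda>ys. means ys (lab ys r) i) \<in> borel_measurable (obs_space n d)) \<longrightarrow>
       ennreal (1/40 * ln (real k)) \<le> expected_error k d n mus means lab"
  proof (intro exI[of _ "mu_of s"] allI impI)
    fix n :: nat and means :: "(nat \<Rightarrow> nat \<Rightarrow> real) \<Rightarrow> nat \<Rightarrow> nat \<Rightarrow> real" and lab :: "(nat \<Rightarrow> nat \<Rightarrow> real) \<Rightarrow> nat \<Rightarrow> nat"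
    assume n: "1 \<le> n"
      and mm: "\<forall>r<n. \<forall>i<d. (\<lambda>ys. means ys (lab ys r) i) \<in> borel_measurable (obs_space n d)"
    have "ennreal (1/40 * ln (real k)) \<le> ennreal (s\<^sup>2 / 20)"
      using lnb by (rule ennreal_leI)
    also have "\<dots> \<le> expected_error k d n (mu_of s) means lab"
    proof -
      have kp: "0 < k" using k2 by simp
      show ?thesis
        using main_bound[where means=means and lab=lab and s=s and k=k and d=d and n=n and lam=lam, OF kp kd n lam mm]
        unfolding Bval .
    qed
    finally show "ennreal (1/40 * ln (real k)) \<le> expected_error k d n (mu_of s) means lab" .
  qed
qed

end
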